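(* Let $P$ and $Q$ be stochastic matrices over a countable set $\Omega$. (1) If $\rho$ is a *-automorphism of $\ell^\infty(\Omega)$ and there exists a $\rho$-similarity from $Arv(P)$ to $Arv(Q)$, then for all $i,j$: $P_{ij}>0\iff Q_{\sigma_\rho(i)\sigma_\rho(j)}>0$. (2) If $\Omega$ is finite, $P$ and $Q$ are essential, and $\sigma$ is a permutation of $\Omega$ with $P_{ij}>0\iff Q_{\sigma(i)\sigma(j)}>0$ for all $i,j$, then there exists a $\rho_\sigma$-similarity from $Arv(P)$ to $Arv(Q)$.
   Context: A stochastic matrix has nonnegative entries and row sums $1$; $P^{(n)}_{ij}$ is the $(i,j)$ entry of $P^n$. $P$ is essential if no state $i$ has some $j$ and $n\ge1$ with $P^{(n)}_{ij}>0$ but $P^{(m)}_{ji}=0$ for all $m\ge1$. For a permutation $\sigma$, $\rho_\sigma(f)=f\circ\sigma^{-1}$; for a *-automorphism $\rho$ of $\ell^\infty(\Omega)$, $\sigma_\rho$ is the permutation with $\rho(p_j)=p_{\sigma_\rho(j)}$, $p_j$ the indicator of $\{j\}$. $Arv(P)$: $Arv(P)_0=\ell^\infty(\Omega)$; $Arv(P)_n$ ($n\ge1$) is the set of complex $\Omega\times\Omega$ matrices $A=[a_{ij}]$ with $a_{ij}=0$ whenever $P^{(n)}_{ij}=0$ and $\sup_j\sum_i|a_{ij}|^2<\infty$, a W*-correspondence over $\ell^\infty(\Omega)$ with actions by diagonal matrices and inner product $\mathrm{Diag}(A^*B)$; $U^P_{n,m}(A\otimes B)=(\sqrt{P^{n+m}})^{\flat}*[(\sqrt{P^n}*A)(\sqrt{P^m}*B)]$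 for $n,m\ge1$ ($*$ entrywise product, $\sqrt\cdot$ entrywise, $M^\flat_{ik}=M_{ik}^{-1}$ if $M_{ik}>0$, else $0$), $U_{0,n},U_{n,0}$ module actions. A $\rho$-similarity $V:Arv(P)\to Arv(Q)$ is a family $(V_n)_{n\ge0}$ with $V_0=\rho$, each $V_n:Arv(P)_n\to Arv(Q)_n$ ($n\ge1$) a bijective bounded linear map with $V_n(a\xi b)=\rho(a)V_n(\xi)\rho(b)$, $\sup_n\max(\|V_n\|,\|V_n^{-1}\|)<\infty$, and $V_{n+m}U^P_{n,m}=U^Q_{n,m}(V_n\otimes V_m)$ for all $n,m$. *)

theory Defs
  imports "HOL-Analysis.Analysis"
begin

definition stochastic :: "('a \<Rightarrow> 'a \<Rightarrow> real) \<Rightarrow> bool" where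
  "stochastic P \<longleftrightarrow> (\<forall>i j. 0 \<le> P i j) \<and> (\<forall>i. ((\<lambda>j. P i j) has_sum 1) UNIV)"

fun matpow :: "('a \<Rightarrow> 'a \<Rightarrow> real) \<Rightarrow> nat \<Rightarrow> 'a \<Rightarrow> 'a \<Rightarrow> real" where
  "matpow P 0 = (\<lambda>i k. if i = k then 1 else 0)"
| "matpow P (Suc n) = (\<lambda>i k. \<Sum>\<^sub>\<infinity>j. matpow P n i j * P j k)"

definition essential :: "('a \<Rightarrow> 'a \<Rightarrow> real) \<Rightarrow> bool" where
  "essential P \<longleftrightarrow> \<not> (\<exists>i j n. n \<ge> 1 \<and> matpow P n i j > 0 \<and>
                              (\<forall>m\<ge>1. matpow P m j i = 0))"

definition linf :: "('a \<Rightarrow> complex) set" where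
  "linf = {f. bounded (range f)}"

definition star_automorphism :: "(('a \<Rightarrow> complex) \<Rightarrow> ('a \<Rightarrow> complex)) \<Rightarrow> bool" where
  "star_automorphism \<rho> \<longleftrightarrow>
     bij_betw \<rho> linf linf \<and>
     (\<forall>f\<in>linf. \<forall>g\<in>linf. \<rho> (\<lambda>x. f x + g x) = (\<lambda>x. \<rho> f x + \<rho> g x)) \<and>
     (\<forall>c. \<forall>f\<in>linf. \<rho> (\<lambda>x. c * f x) = (\<lambda>x. c * \<rho> f x)) \<and>
     (\<forall>f\<in>linf. \<forall>g\<in>linf. \<rho> (\<lambda>x. f x * g x) = (\<lambda>x. \<rho> f x * \<rho> g x)) \<and>
     (\<forall>f\<in>linf. \<rho> (\<lambda>x. cnj (f x)) = (\<lambda>x. cnj (\<rho> f x)))"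

definition pt :: "'a \<Rightarrow> 'a \<Rightarrow> complex" where
  "pt j = (\<lambda>i. if i = j then 1 else 0)"

definition sigma_of :: "(('a \<Rightarrow> complex) \<Rightarrow> ('a \<Rightarrow> complex)) \<Rightarrow> 'a \<Rightarrow> 'a" where
  "sigma_of \<rho> j = (THE k. \<rho> (pt j) = pt k)"

definition rho_of :: "('a \<Rightarrow> 'a) \<Rightarrow> ('a \<Rightarrow> complex) \<Rightarrow> ('a \<Rightarrow> complex)" where
  "rho_of \<sigma> f = f \<circ> inv \<sigma>"

text \<open>Diagonal matrix of a function; elements of Arv(P)_0 = ell-infinity are represented
  as diagonal matrices.\<close>
definition diagm :: "('a \<Rightarrow> complex) \<Rightarrow> 'a \<Rightarrow> 'a \<Rightarrow> complex" where
  "diagm f = (\<lambda>i k. if i = k then f i else 0)"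

text \<open>Arv(P)_n.  For n = 0 (P^0 = identity) this is exactly the set of diagonal matrices
  with bounded diagonal, i.e. ell-infinity.\<close>
definition Arv :: "('a \<Rightarrow> 'a \<Rightarrow> real) \<Rightarrow> nat \<Rightarrow> ('a \<Rightarrow> 'a \<Rightarrow> complex) set" where
  "Arv P n = {A. (\<forall>i j. matpow P n i j = 0 \<longrightarrow> A i j = 0) \<and>
                 (\<forall>j. (\<lambda>i. (cmod (A i j))\<^sup>2) summable_on UNIV) \<and>
                 bdd_above (range (\<lambda>j. \<Sum>\<^sub>\<infinity>i. (cmod (A i j))\<^sup>2))}"

text \<open>Norm of the W*-correspondence: ||A|| = ||Diag(A^* A)||^(1/2).\<close>
definition arv_norm :: "('a \<Rightarrow> 'a \<Rightarrow> complex) \<Rightarrow> real" where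
  "arv_norm A = sqrt (SUP j. \<Sum>\<^sub>\<infinity>i. (cmod (A i j))\<^sup>2)"

definition bimod :: "('a \<Rightarrow> complex) \<Rightarrow> ('a \<Rightarrow> 'a \<Rightarrow> complex) \<Rightarrow> ('a \<Rightarrow> complex) \<Rightarrow> 'a \<Rightarrow> 'a \<Rightarrow> complex" where
  "bimod a X b = (\<lambda>i j. a i * X i j * b j)"

definition matmul :: "('a \<Rightarrow> 'a \<Rightarrow> complex) \<Rightarrow> ('a \<Rightarrow> 'a \<Rightarrow> complex) \<Rightarrow> 'a \<Rightarrow> 'a \<Rightarrow> complex" where
  "matmul X Y = (\<lambda>i k. \<Sum>\<^sub>\<infinity>j. X i j * Y j k)"

definition flat :: "('a \<Rightarrow> 'a \<Rightarrow> real) \<Rightarrow> 'a \<Rightarrow> 'a \<Rightarrow> real" where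
  "flat M = (\<lambda>i k. if M i k > 0 then 1 / M i k else 0)"

definition sqrtP :: "('a \<Rightarrow> 'a \<Rightarrow> real) \<Rightarrow> nat \<Rightarrow> 'a \<Rightarrow> 'a \<Rightarrow> real" where
  "sqrtP P n = (\<lambda>i k. sqrt (matpow P n i k))"

text \<open>The multiplication maps U^P_{n,m}, evaluated on elementary tensors A (x) B.
  For n = 0 or m = 0 they are the module actions (A resp. B is then diagonal).\<close>
definition UP :: "('a \<Rightarrow> 'a \<Rightarrow> real) \<Rightarrow> nat \<Rightarrow> nat \<Rightarrow> ('a \<Rightarrow> 'a \<Rightarrow> complex) \<Rightarrow>
                  ('a \<Rightarrow> 'a \<Rightarrow> complex) \<Rightarrow> 'a \<Rightarrow> 'a \<Rightarrow> complex" where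
  "UP P n m A B =
     (if n = 0 then (\<lambda>i k. A i i * B i k)
      else if m = 0 then (\<lambda>i k. A i k * B k k)
      else (\<lambda>i k. complex_of_real (flat (sqrtP P (n + m)) i k) *
              matmul (\<lambda>i j. complex_of_real (sqrtP P n i j) * A i j)
                     (\<lambda>j k. complex_of_real (sqrtP P m j k) * B j k) i k))"

definition similarity ::
  "('a \<Rightarrow> 'a \<Rightarrow> real) \<Rightarrow> ('a \<Rightarrow> 'a \<Rightarrow> real) \<Rightarrow> (('a \<Rightarrow> complex) \<Rightarrow> ('a \<Rightarrow> complex)) \<Rightarrow>
   (nat \<Rightarrow> ('a \<Rightarrow> 'a \<Rightarrow> complex) \<Rightarrow> ('a \<Rightarrow> 'a \<Rightarrow> complex)) \<Rightarrow> bool" where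
  "similarity P Q \<rho> V \<longleftrightarrow>
     (\<forall>f\<in>linf. V 0 (diagm f) = diagm (\<rho> f)) \<and>
     (\<forall>n\<ge>1. bij_betw (V n) (Arv P n) (Arv Q n)) \<and>
     (\<forall>n\<ge>1. \<forall>A\<in>Arv P n. \<forall>B\<in>Arv P n.
         V n (\<lambda>i j. A i j + B i j) = (\<lambda>i j. V n A i j + V n B i j)) \<and>
     (\<forall>n\<ge>1. \<forall>c. \<forall>A\<in>Arv P n. V n (\<lambda>i j. c * A i j) = (\<lambda>i j. c * V n A i j)) \<and>
     (\<forall>n\<ge>1. \<forall>a\<in>linf. \<forall>b\<in>linf. \<forall>X\<in>Arv P n.
         V n (bimod a X b) = bimod (\<rho> a) (V n X) (\<rho> b)) \<and>
     (\<exists>C. \<forall>n\<ge>1. (\<forall>A\<in>Arv P n. arv_norm (V n A) \<le> C * arv_norm A) \<and>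
                 (\<forall>B\<in>Arv Q n. arv_norm (inv_into (Arv P n) (V n) B) \<le> C * arv_norm B)) \<and>
     (\<forall>n m. \<forall>A\<in>Arv P n. \<forall>B\<in>Arv P m.
         V (n + m) (UP P n m A B) = UP Q n m (V n A) (V m B))"

end

theory Submission
  imports Defs
begin



lemma pt_linf: "pt j \<in> linf"
proof -
  have "range (pt j) \<subseteq> {0,1}" by (auto simp: pt_def)
  then have "finite (range (pt j))" using finite_subset by blast
  then show ?thesis by (simp add: linf_def finite_imp_bounded)
qed

lemma pt_inj: "pt a = pt b \<Longrightarrow> a = b"
  by (metis pt_def one_neq_zero)

lemma rho_zero:
  assumes "star_automorphism \<rho>" shows "\<rho> (\<lambda>x. 0) = (\<lambda>x. 0)"
proof -
  have z: "(\<lambda>x::'a. 0::complex) \<in> linf" by (simp add: linf_def)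
  have hom: "\<forall>c. \<forall>f\<in>linf. \<rho> (\<lambda>x. c * f x) = (\<lambda>x. c * \<rho> f x)"
    using assms unfolding star_automorphism_def by blast
  show ?thesis using hom[rule_format, OF z, of 0] by simp
qed

lemma rho_pt:
  assumes sa: "star_automorphism \<rho>" shows "\<exists>k. \<rho> (pt j) = pt k"
proof -
  have bij: "bij_betw \<rho> linf linf" and mult: "\<forall>f\<in>linf. \<forall>g\<in>linf. \<rho> (\<lambda>x. f x * g x) = (\<lambda>x. \<rho> f x * \<rho> g x)"
   and hom: "\<forall>c. \<forall>f\<in>linf. \<rho> (\<lambda>x. c * f x) = (\<lambda>x. c * \<rho> f x)"
    using sa unfolding star_automorphism_def by auto
  define e where "e = \<rho> (pt j)"
  have ptsq: "(\<lambda>x. pt j x * pt j x) = pt j" by (auto simp: pt_def)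
  have "e = (\<lambda>x. e x * e x)" using mult pt_linf[of j] ptsq unfolding e_def by metis
  then have e01: "\<And>x. e x = 0 \<or> e x = 1" by (metis mult_cancel_right1 mult_eq_0_iff)
  have z: "(\<lambda>x::'a. 0::complex) \<in> linf" by (simp add: linf_def)
  have "pt j \<noteq> (\<lambda>x. 0)" by (metis pt_def one_neq_zero)
  then have "e \<noteq> (\<lambda>x. 0)" using bij z pt_linf[of j] rho_zero[OF sa] unfolding e_def bij_betw_def inj_on_def
    by metis
  then obtain k where ek: "e k = 1" using e01 by blast
  have "e = pt k"
  proof (rule ccontr)
    assume "e \<noteq> pt k"
    then obtain k' where "e k' \<noteq> pt k k'" by blast
    then have k': "k' \<noteq> k" "e k' = 1" using ek e01[of k'] by (auto simp: pt_def split: if_splits)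
    obtain g where g: "g \<in> linf" "\<rho> g = pt k" using bij pt_linf[of k] unfolding bij_betw_def by (metis imageE)
    have gl: "(\<lambda>x. g x * pt j x) \<in> linf"
    proof -
      from g(1) obtain B where "\<forall>x. norm (g x) \<le> B" unfolding linf_def bounded_iff by auto
      then have "\<forall>x. norm (g x * pt j x) \<le> B"
        by (metis (no_types, lifting) mult.right_neutral mult_zero_right norm_ge_zero norm_zero order_trans pt_def)
      then show ?thesis unfolding linf_def bounded_iff by auto
    qed
    have "\<rho> (\<lambda>x. g x * pt j x) = (\<lambda>x. pt k x * e x)" using mult g pt_linf[of j] unfolding e_def by auto
    also have "\<dots> = pt k" using ek by (auto simp: pt_def)
    finally have "(\<lambda>x. g x * pt j x) = g" using bij gl g unfolding bij_betw_def inj_on_def by metis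
    then have "g = (\<lambda>x. g j * pt j x)" by (metis (no_types, lifting) mult.commute pt_def mult_zero_left mult_1)
    then have "pt k = (\<lambda>x. g j * e x)" using hom pt_linf[of j] g unfolding e_def by metis
    then have "pt k k' = g j * e k'" "pt k k = g j * e k" by metis+
    then show False using k' ek by (simp add: pt_def)
  qed
  then show ?thesis unfolding e_def by blast
qed

lemma rho_sigma:
  assumes "star_automorphism \<rho>" shows "\<rho> (pt j) = pt (sigma_of \<rho> j)"
proof -
  obtain k where k: "\<rho> (pt j) = pt k" using rho_pt[OF assms] by blast
  have "sigma_of \<rho> j = k" unfolding sigma_of_def k by (rule the_equality) (auto dest: pt_inj)
  then show ?thesis using k by simp
qed




lemma single_supp:
  fixes f :: "'a \<Rightarrow> 'b::{comm_monoid_add, t2_space}"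
  assumes "\<And>x. x \<noteq> a \<Longrightarrow> f x = 0"
  shows "f summable_on UNIV" "infsum f UNIV = f a"
proof -
  have "f summable_on UNIV \<longleftrightarrow> f summable_on {a}"
    by (rule summable_on_cong_neutral) (use assms in auto)
  then show "f summable_on UNIV" by simp
  have "infsum f UNIV = infsum f {a}"
    by (rule infsum_cong_neutral) (use assms in auto)
  then show "infsum f UNIV = f a" by simp
qed

lemma matpow_1: "matpow P 1 = P"
proof (intro ext)
  fix i k
  have "matpow P 1 i k = (\<Sum>\<^sub>\<infinity>j. (if i = j then 1 else 0) * P j k)" by simp
  also have "\<dots> = P i k" by (subst single_supp(2)[where a=i]) auto
  finally show "matpow P 1 i k = P i k" .
qed

lemma matpow_Suc0[simp]: "matpow P (Suc 0) i k = P i k"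
  using matpow_1[of P] unfolding One_nat_def by simp

lemma matpow_one[simp]: "matpow P 1 i k = P i k"
  using matpow_1[of P] by simp

definition E1 :: "'a \<Rightarrow> 'a \<Rightarrow> complex \<Rightarrow> 'a \<Rightarrow> 'a \<Rightarrow> complex" where
  "E1 a b c = (\<lambda>i j. if i = a \<and> j = b then c else 0)"

lemma E1_Arv: "(matpow P n a b = 0 \<longrightarrow> c = 0) \<Longrightarrow> E1 a b c \<in> Arv P n"
proof -
  assume h: "matpow P n a b = 0 \<longrightarrow> c = 0"
  have s: "(\<lambda>i. (cmod (E1 a b c i j))\<^sup>2) summable_on UNIV" for j
    by (rule single_supp(1)[where a=a]) (auto simp: E1_def)
  have v: "(\<Sum>\<^sub>\<infinity>i. (cmod (E1 a b c i j))\<^sup>2) \<le> (cmod c)\<^sup>2" for j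
    by (subst single_supp(2)[where a=a]) (auto simp: E1_def)
  show ?thesis unfolding Arv_def using h s v
    by (auto simp: E1_def intro!: bdd_aboveI2[where M="(cmod c)\<^sup>2"])
qed

lemma V_zero:
  assumes "\<forall>n\<ge>1. \<forall>c. \<forall>A\<in>Arv P n. V n (\<lambda>i j. c * A i j) = (\<lambda>i j. c * V n A i j)"
    and "n \<ge> 1" and "A \<in> Arv P n"
  shows "V n (\<lambda>i j. 0) = (\<lambda>i j. 0)"
proof -
  have "V n (\<lambda>i j. 0 * A i j) = (\<lambda>i j. 0 * V n A i j)" using assms by blast
  then show ?thesis by simp
qed

lemma part1:
  fixes P Q :: "'a::countable \<Rightarrow> 'a \<Rightarrow> real"
  assumes sP: "stochastic P" and sQ: "stochastic Q"
    and sa: "star_automorphism \<rho>" and sim: "similarity P Q \<rho> V"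
  shows "P i j > 0 \<longleftrightarrow> Q (sigma_of \<rho> i) (sigma_of \<rho> j) > 0"
proof -
  define s where "s = sigma_of \<rho>"
  have bij: "bij_betw (V 1) (Arv P 1) (Arv Q 1)"
    and hom: "\<forall>n\<ge>1. \<forall>c. \<forall>A\<in>Arv P n. V n (\<lambda>i j. c * A i j) = (\<lambda>i j. c * V n A i j)"
    using sim unfolding similarity_def by auto
  have bm0: "\<forall>n\<ge>1. \<forall>a\<in>linf. \<forall>b\<in>linf. \<forall>X\<in>Arv P n.
         V n (bimod a X b) = bimod (\<rho> a) (V n X) (\<rho> b)" using sim unfolding similarity_def by blast
  have bm: "V 1 (bimod (pt i) X (pt j)) = bimod (pt (s i)) (V 1 X) (pt (s j))" if "X \<in> Arv P 1" for X
    using bm0[rule_format, of 1 "pt i" "pt j" X] that pt_linf rho_sigma[OF sa] unfolding s_def by (metis order_refl)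
  have z0: "(\<lambda>i j. 0) \<in> Arv P 1" using E1_Arv[of P 1 i j 0] by (simp add: E1_def)
  have Vz: "V 1 (\<lambda>i j. 0) = (\<lambda>i j. 0)" using V_zero[OF hom _ z0] by simp
  have nnP: "P a b \<ge> 0" for a b using sP unfolding stochastic_def by auto
  have nnQ: "Q a b \<ge> 0" for a b using sQ unfolding stochastic_def by auto
  show ?thesis unfolding s_def[symmetric]
  proof
    assume p: "P i j > 0"
    define X where "X = E1 i j 1"
    have X: "X \<in> Arv P 1" unfolding X_def using p by (intro E1_Arv) (simp del: matpow.simps)
    have Xb: "bimod (pt i) X (pt j) = X" by (auto simp: bimod_def pt_def X_def E1_def intro!: ext)
    define Y where "Y = V 1 X"
    have Y: "Y \<in> Arv Q 1" using bij X unfolding Y_def bij_betw_def by auto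
    have Yb: "Y = bimod (pt (s i)) Y (pt (s j))" using bm[OF X] Xb unfolding Y_def by simp
    have "Y \<noteq> (\<lambda>i j. 0)"
    proof
      assume "Y = (\<lambda>i j. 0)"
      then have X0: "X = (\<lambda>i j. 0)" using inj_onD[OF bij_betw_imp_inj_on[OF bij], of X "\<lambda>i j. 0"] X z0 Vz unfolding Y_def by simp
      show False using fun_cong[OF fun_cong[OF X0, of i], of j] by (simp add: X_def E1_def)
    qed
    then obtain a b where ab: "Y a b \<noteq> 0" by blast
    have eq: "Y a b = pt (s i) a * Y a b * pt (s j) b"
      using fun_cong[OF fun_cong[OF Yb, of a], of b] by (simp only: bimod_def)
    have "a = s i" using ab eq unfolding pt_def by (metis mult_zero_left)
    moreover have "b = s j" using ab eq unfolding pt_def by (metis mult_zero_right)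
    ultimately have "a = s i" "b = s j" by auto
    moreover have "\<forall>a b. matpow Q 1 a b = 0 \<longrightarrow> Y a b = 0" using Y unfolding Arv_def by blast
    ultimately have "Q (s i) (s j) \<noteq> 0" using ab by (metis matpow_one)
    then show "Q (s i) (s j) > 0" using nnQ by (simp add: order_le_neq_trans)
  next
    assume q: "Q (s i) (s j) > 0"
    define Y where "Y = E1 (s i) (s j) 1"
    have Y: "Y \<in> Arv Q 1" unfolding Y_def using q by (intro E1_Arv) (simp del: matpow.simps)
    define X where "X = inv_into (Arv P 1) (V 1) Y"
    have X: "X \<in> Arv P 1" unfolding X_def using bij_betw_apply[OF bij_betw_inv_into[OF bij] Y] .
    have VX: "V 1 X = Y" unfolding X_def using bij_betw_inv_into_right[OF bij Y] .
    define X' where "X' = E1 i j (X i j)"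
    have hX: "\<forall>a b. matpow P 1 a b = 0 \<longrightarrow> X a b = 0" using X unfolding Arv_def by blast
    have X': "X' \<in> Arv P 1" unfolding X'_def using hX by (intro E1_Arv) blast
    have "bimod (pt i) X (pt j) = X'" by (auto simp: bimod_def pt_def X'_def E1_def intro!: ext)
    moreover have "bimod (pt (s i)) Y (pt (s j)) = Y" by (auto simp: bimod_def pt_def Y_def E1_def intro!: ext)
    ultimately have "V 1 X' = V 1 X" using bm[OF X] VX by simp
    then have XX: "X' = X" using inj_onD[OF bij_betw_imp_inj_on[OF bij], of X' X] X X' by simp
    have "X \<noteq> (\<lambda>i j. 0)"
    proof
      assume "X = (\<lambda>i j. 0)"
      then have Y0: "Y = (\<lambda>i j. 0)" using VX Vz by simp
      show False using fun_cong[OF fun_cong[OF Y0, of "s i"], of "s j"] by (simp add: Y_def E1_def)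
    qed
    then have "X i j \<noteq> 0"
    proof (rule contrapos_nn)
      assume "X i j = 0"
      then have "X' = (\<lambda>i j. 0)" unfolding X'_def E1_def by (auto intro!: ext)
      then show "X = (\<lambda>i j. 0)" using XX by simp
    qed
    then have "P i j \<noteq> 0" using hX by (metis matpow_one)
    then show "P i j > 0" using nnP by (simp add: order_le_neq_trans)
  qed
qed




lemma sum_pos_iff_nonneg:
  fixes f :: "'b \<Rightarrow> real"
  assumes "finite A" "\<And>x. x \<in> A \<Longrightarrow> f x \<ge> 0"
  shows "sum f A > 0 \<longleftrightarrow> (\<exists>x\<in>A. f x > 0)"
proof
  assume h: "sum f A > 0"
  show "\<exists>x\<in>A. f x > 0"
  proof (rule ccontr)
    assume "\<not> (\<exists>x\<in>A. f x > 0)"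
    then have "\<And>x. x \<in> A \<Longrightarrow> f x \<le> 0" by (simp add: not_less)
    then have "sum f A \<le> 0" by (rule sum_nonpos)
    then show False using h by simp
  qed
next
  assume "\<exists>x\<in>A. f x > 0"
  then obtain x where x: "x \<in> A" "f x > 0" by blast
  show "sum f A > 0" by (rule sum_pos2[of A x f]) (use assms x in auto)
qed

context
  fixes P :: "'a \<Rightarrow> 'a \<Rightarrow> real"
  assumes fin: "finite (UNIV :: 'a set)" and sto: "stochastic P"
begin

lemma P_nonneg: "0 \<le> P i j" using sto unfolding stochastic_def by auto

lemma P_row: "(\<Sum>j\<in>UNIV. P i j) = 1"
proof -
  have "((\<lambda>j. P i j) has_sum 1) UNIV" using sto unfolding stochastic_def by auto
  moreover have "((\<lambda>j. P i j) has_sum (\<Sum>j\<in>UNIV. P i j)) UNIV" using fin by simp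
  ultimately show ?thesis using has_sum_unique by (metis (no_types))
qed

lemma mp_Suc: "matpow P (Suc n) i k = (\<Sum>j\<in>UNIV. matpow P n i j * P j k)"
  using fin by simp

lemma mp_nonneg: "0 \<le> matpow P n i j"
proof (induction n arbitrary: j)
  case 0 then show ?case by simp
next
  case (Suc n) then show ?case unfolding mp_Suc by (intro sum_nonneg) (simp add: P_nonneg)
qed

lemma mp_row: "(\<Sum>k\<in>UNIV. matpow P n i k) = 1"
proof (induction n)
  case 0
  have "(\<Sum>k\<in>UNIV. matpow P 0 i k) = (\<Sum>k\<in>UNIV. if i = k then 1 else 0)" by simp
  also have "\<dots> = 1" using fin by simp
  finally show ?case .
next
  case (Suc n)
  have "(\<Sum>k\<in>UNIV. matpow P (Suc n) i k) = (\<Sum>k\<in>UNIV. \<Sum>j\<in>UNIV. matpow P n i j * P j k)"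
    unfolding mp_Suc ..
  also have "\<dots> = (\<Sum>j\<in>UNIV. matpow P n i j * (\<Sum>k\<in>UNIV. P j k))"
    by (subst sum.swap) (simp add: sum_distrib_left)
  also have "\<dots> = 1" using Suc by (simp add: P_row)
  finally show ?case .
qed

lemma mp_le1: "matpow P n i j \<le> 1"
proof -
  have "matpow P n i j \<le> (\<Sum>k\<in>UNIV. matpow P n i k)"
    using fin by (intro member_le_sum) (auto simp: mp_nonneg)
  then show ?thesis by (simp add: mp_row)
qed

lemma mp_add: "matpow P (n + m) i k = (\<Sum>j\<in>UNIV. matpow P n i j * matpow P m j k)"
proof (induction m arbitrary: k)
  case 0
  have "(\<Sum>j\<in>UNIV. matpow P n i j * matpow P 0 j k) = (\<Sum>j\<in>UNIV. if j = k then matpow P n i j else 0)"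
    by (intro sum.cong) auto
  also have "\<dots> = matpow P n i k" using fin by simp
  finally show ?case by simp
next
  case (Suc m)
  have "matpow P (n + Suc m) i k = (\<Sum>l\<in>UNIV. matpow P (n + m) i l * P l k)"
    by (simp only: add_Suc_right mp_Suc)
  also have "\<dots> = (\<Sum>l\<in>UNIV. \<Sum>j\<in>UNIV. matpow P n i j * matpow P m j l * P l k)"
    by (simp add: Suc sum_distrib_right)
  also have "\<dots> = (\<Sum>j\<in>UNIV. matpow P n i j * (\<Sum>l\<in>UNIV. matpow P m j l * P l k))"
    by (subst sum.swap) (simp add: sum_distrib_left mult.assoc)
  also have "\<dots> = (\<Sum>j\<in>UNIV. matpow P n i j * matpow P (Suc m) j k)"
    by (simp only: mp_Suc)
  finally show ?case .
qed

lemma pos_add: "matpow P (n + m) i k > 0 \<longleftrightarrow> (\<exists>j. matpow P n i j > 0 \<and> matpow P m j k > 0)"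
proof -
  have "matpow P (n + m) i k > 0 \<longleftrightarrow> (\<exists>j\<in>UNIV. matpow P n i j * matpow P m j k > 0)"
    unfolding mp_add using fin by (intro sum_pos_iff_nonneg) (auto simp: mp_nonneg)
  also have "\<dots> \<longleftrightarrow> (\<exists>j. matpow P n i j > 0 \<and> matpow P m j k > 0)"
    using mp_nonneg by (auto simp: zero_less_mult_iff) (meson not_less)
  finally show ?thesis .
qed

lemma pos_0: "matpow P 0 i k > 0 \<longleftrightarrow> i = k" by simp

lemma pos_addI: "matpow P n i j > 0 \<Longrightarrow> matpow P m j k > 0 \<Longrightarrow> matpow P (n + m) i k > 0"
  using pos_add[of n m i k] by blast

lemma pos_addE: "matpow P (n + m) i k > 0 \<Longrightarrow> \<exists>j. matpow P n i j > 0 \<and> matpow P m j k > 0"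
  using pos_add[of n m i k] by blast

lemma loop_pow: "matpow P l a a > 0 \<Longrightarrow> matpow P (l * t) a a > 0"
proof (induction t)
  case 0 then show ?case by simp
next
  case (Suc t)
  then have "matpow P (l * t + l) a a > 0" using pos_addI by blast
  then show ?case by (simp add: add.commute)
qed

definition RS :: "nat \<Rightarrow> ('a \<times> 'a) set" where
  "RS n = {(i, j). matpow P n i j > 0}"

lemma RS_add: "RS x = RS x' \<Longrightarrow> RS (x + y) = RS (x' + y)"
proof -
  assume h: "RS x = RS x'"
  have "(matpow P x i j > 0) = (matpow P x' i j > 0)" for i j
  proof -
    have "(i, j) \<in> RS x \<longleftrightarrow> (i, j) \<in> RS x'" using h by simp
    then show ?thesis unfolding RS_def by simp
  qed
  then have "(matpow P (x + y) i k > 0) = (matpow P (x' + y) i k > 0)" for i k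
    using pos_add[of x y i k] pos_add[of x' y i k] by simp
  then show ?thesis unfolding RS_def by auto
qed

lemma idem_exists: "\<exists>M\<ge>1. \<forall>t\<ge>1. RS (t * M) = RS M"
proof -
  have "finite (UNIV :: ('a \<times> 'a) set)"
    using finite_cartesian_product[OF fin fin] by (simp only: UNIV_Times_UNIV)
  then have "finite (Pow (UNIV :: ('a \<times> 'a) set))" by (simp only: finite_Pow_iff)
  then have "finite (range RS)"
    by (rule finite_subset[rotated]) auto
  have "\<not> inj RS"
  proof
    assume "inj RS"
    then have "finite (UNIV :: nat set)" using finite_imageD[OF \<open>finite (range RS)\<close>] by blast
    then show False by simp
  qed
  then obtain a0 b0 where ab0: "a0 \<noteq> b0" "RS a0 = RS b0" unfolding inj_def by blast
  obtain a b where ab: "a < b" "RS a = RS b"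
  proof (cases "a0 < b0")
    case True then show ?thesis using that ab0 by blast
  next
    case False then have "b0 < a0" using ab0(1) by simp
    then show ?thesis using that ab0(2)[symmetric] by blast
  qed
  define p where "p = b - a"
  have p: "p \<ge> 1" using ab unfolding p_def by simp
  have per1: "RS (n + p) = RS n" if "n \<ge> a" for n
  proof -
    have "RS (b + (n - a)) = RS (a + (n - a))" using RS_add[OF ab(2)[symmetric]] .
    moreover have "b + (n - a) = n + p" "a + (n - a) = n" using that ab unfolding p_def by auto
    ultimately show ?thesis by simp
  qed
  have per: "RS (n + k * p) = RS n" if "n \<ge> a" for n k
  proof (induction k)
    case 0 then show ?case by simp
  next
    case (Suc k)
    have "RS (n + Suc k * p) = RS ((n + k * p) + p)" by (simp add: algebra_simps)
    also have "\<dots> = RS (n + k * p)" using per1[of "n + k * p"] that by simp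
    finally show ?case using Suc by simp
  qed
  define M where "M = (a + 1) * p"
  have "a * 1 \<le> a * p" using p by (rule mult_le_mono2)
  then have M1: "M \<ge> 1" "M \<ge> a" using p unfolding M_def by (simp_all add: trans_le_add2)
  have "RS (t * M) = RS M" if t1: "t \<ge> 1" for t
  proof -
    obtain t' where t': "t = Suc t'" using Suc_le_D[of 0 t] t1 by auto
    have tM: "t * M = M + ((t - 1) * (a + 1)) * p" unfolding M_def t' by (simp add: algebra_simps)
    show ?thesis unfolding tM by (rule per[OF M1(2)])
  qed
  then show ?thesis using M1 by auto
qed

lemma RS_eq: "RS x = RS y \<Longrightarrow> (matpow P x i j > 0) = (matpow P y i j > 0)"
proof -
  assume h: "RS x = RS y"
  have "(i, j) \<in> RS x \<longleftrightarrow> (i, j) \<in> RS y" using h by simp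
  then show ?thesis unfolding RS_def by simp
qed

lemma lower_bound:
  assumes ess: "essential P"
  shows "\<exists>c>0. \<forall>n i j. matpow P n i j > 0 \<longrightarrow> c \<le> matpow P n i j"
proof -
  obtain M where M: "M \<ge> 1" "\<And>t. t \<ge> 1 \<Longrightarrow> RS (t * M) = RS M" using idem_exists by blast
  have EM: "matpow P (t * M) a b > 0 \<longleftrightarrow> matpow P M a b > 0" if "t \<ge> 1" for t a b
    using RS_eq[OF M(2)[OF that]] .
  define S where "S = {matpow P n a b | n a b. n \<le> M \<and> 0 < matpow P n a b} \<union> {1}"
  have "S \<subseteq> insert 1 ((\<lambda>(n, a, b). matpow P n a b) ` ({..M} \<times> UNIV \<times> UNIV))"
  proof
    fix x assume "x \<in> S"
    then consider "x = 1" | n a b where "x = matpow P n a b" "n \<le> M" unfolding S_def by blast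
    then show "x \<in> insert 1 ((\<lambda>(n, a, b). matpow P n a b) ` ({..M} \<times> UNIV \<times> UNIV))"
    proof cases
      case 1 then show ?thesis by simp
    next
      case 2 then show ?thesis by (intro insertI2 rev_image_eqI[where x="(n, a, b)"]) auto
    qed
  qed
  moreover have "finite ({..M} \<times> (UNIV::'a set) \<times> (UNIV::'a set))"
    by (intro finite_cartesian_product fin) simp
  ultimately have finS: "finite S" by (meson finite_imageI finite_insert finite_subset)
  define c where "c = Min S"
  have Sne: "S \<noteq> {}" unfolding S_def by simp
  have cpos: "c > 0" unfolding c_def using finS Sne by (subst Min_gr_iff) (auto simp: S_def)
  have small: "c \<le> matpow P n a b" if "n \<le> M" "0 < matpow P n a b" for n a b
    unfolding c_def using finS that by (intro Min_le) (auto simp: S_def)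
  have "\<forall>n i j. matpow P n i j > 0 \<longrightarrow> c \<le> matpow P n i j"
  proof (intro allI impI)
    fix n i j assume pos: "matpow P n i j > 0"
    show "c \<le> matpow P n i j"
    proof (cases "n \<le> M")
      case True then show ?thesis using small pos by blast
    next
      case False
      define s where "s = n - M"
      have s1: "s \<ge> 1" and ns: "n = s + M" using False unfolding s_def by auto
      obtain k0 where k0: "matpow P s i k0 > 0" "matpow P M k0 j > 0" using pos_addE[of s M i j] pos ns by blast
      have goodk: "matpow P M k j > 0" if ks: "matpow P s i k > 0" for k
      proof -
        obtain m where m: "m \<ge> 1" "matpow P m k i > 0"
        proof -
          have "\<not> (\<forall>m\<ge>1. matpow P m k i = 0)" using ess ks s1 unfolding essential_def by blast
          then obtain m where "m \<ge> 1" "matpow P m k i \<noteq> 0" by blast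
          then show ?thesis using that mp_nonneg[of m k i] by (simp add: order_le_neq_trans)
        qed
        define l where "l = m + s"
        have lkk: "matpow P l k k > 0" using pos_addI[OF m(2) ks] unfolding l_def .
        have lkk0: "matpow P l k k0 > 0" using pos_addI[OF m(2) k0(1)] unfolding l_def .
        have "matpow P (l * (M - 1)) k k > 0" using loop_pow[OF lkk] .
        then have "matpow P (l * (M - 1) + l) k k0 > 0" using pos_addI[OF _ lkk0] by blast
        moreover have "l * (M - 1) + l = l * M" using M(1)
          using M(1) by (cases M) auto
        ultimately have "matpow P (l * M) k k0 > 0" by simp
        then have kk0: "matpow P M k k0 > 0" using EM[of l] m unfolding l_def by simp
        have "matpow P (M + M) k j > 0" using pos_addI[OF kk0 k0(2)] .
        then have "matpow P (2 * M) k j > 0" by (simp add: mult_2)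
        then show ?thesis using EM[of 2] by simp
      qed
      have "(\<Sum>k\<in>UNIV. matpow P s i k * c) \<le> (\<Sum>k\<in>UNIV. matpow P s i k * matpow P M k j)"
      proof (intro sum_mono)
        fix k
        show "matpow P s i k * c \<le> matpow P s i k * matpow P M k j"
        proof (cases "matpow P s i k > 0")
          case True
          then show ?thesis using small[OF order_refl goodk[OF True]] by (simp add: mult_left_mono)
        next
          case False
          then have "matpow P s i k = 0" using mp_nonneg[of s i k] by simp
          then show ?thesis by simp
        qed
      qed
      then have "c * (\<Sum>k\<in>UNIV. matpow P s i k) \<le> matpow P n i j"
        unfolding ns mp_add by (simp add: sum_distrib_left mult.commute)
      then show ?thesis by (simp add: mp_row)
    qed
  qed
  then show ?thesis using cpos by blast
qed

end




lemma Arv_fin: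
  assumes fin: "finite (UNIV :: 'a set)"
  shows "Arv P n = {A :: 'a \<Rightarrow> 'a \<Rightarrow> complex. \<forall>i j. matpow P n i j = 0 \<longrightarrow> A i j = 0}"
  unfolding Arv_def using fin by (auto intro!: bdd_above_finite)

lemma arv_norm_le:
  fixes A B :: "'a \<Rightarrow> 'a \<Rightarrow> complex"
  assumes fin: "finite (UNIV :: 'a set)" and bij: "bij t" and K: "K \<ge> 0"
    and le: "\<And>i j. cmod (B i j) \<le> K * cmod (A (t i) (t j))"
  shows "arv_norm B \<le> K * arv_norm A"
proof -
  define sA where "sA j = (\<Sum>i\<in>UNIV. (cmod (A i j))\<^sup>2)" for j
  define sB where "sB j = (\<Sum>i\<in>UNIV. (cmod (B i j))\<^sup>2)" for j
  have nA: "arv_norm A = sqrt (SUP j. sA j)" unfolding arv_norm_def sA_def using fin by simp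
  have nB: "arv_norm B = sqrt (SUP j. sB j)" unfolding arv_norm_def sB_def using fin by simp
  have bdd: "bdd_above (range sA)" using fin by (intro bdd_above_finite) simp
  have "sB j \<le> K\<^sup>2 * (SUP j. sA j)" for j
  proof -
    have "sB j \<le> (\<Sum>i\<in>UNIV. K\<^sup>2 * (cmod (A (t i) (t j)))\<^sup>2)"
      unfolding sB_def
    proof (intro sum_mono)
      fix i
      have "cmod (B i j) \<le> K * cmod (A (t i) (t j))" by (rule le)
      then have "(cmod (B i j))\<^sup>2 \<le> (K * cmod (A (t i) (t j)))\<^sup>2"
        by (intro power_mono) auto
      then show "(cmod (B i j))\<^sup>2 \<le> K\<^sup>2 * (cmod (A (t i) (t j)))\<^sup>2" by (simp add: power_mult_distrib)
    qed
    also have "\<dots> = K\<^sup>2 * sA (t j)" unfolding sA_def sum_distrib_left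
      using sum.reindex_bij_betw[OF bij, of "\<lambda>i. K\<^sup>2 * (cmod (A i (t j)))\<^sup>2"] by simp
    also have "\<dots> \<le> K\<^sup>2 * (SUP j. sA j)"
      by (intro mult_left_mono cSUP_upper bdd) auto
    finally show ?thesis .
  qed
  then have "(SUP j. sB j) \<le> K\<^sup>2 * (SUP j. sA j)" by (intro cSUP_least) auto
  then have "sqrt (SUP j. sB j) \<le> sqrt (K\<^sup>2 * (SUP j. sA j))" by (rule real_sqrt_le_mono)
  also have "\<dots> = K * sqrt (SUP j. sA j)" using K by (simp add: real_sqrt_mult)
  finally show ?thesis using nA nB by simp
qed

lemma pattern_pow:
  fixes P Q :: "'a \<Rightarrow> 'a \<Rightarrow> real"
  assumes fin: "finite (UNIV :: 'a set)" and sP: "stochastic P" and sQ: "stochastic Q"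
    and bij: "bij \<sigma>" and pat: "\<forall>i j. P i j > 0 \<longleftrightarrow> Q (\<sigma> i) (\<sigma> j) > 0"
  shows "matpow P n a b > 0 \<longleftrightarrow> matpow Q n (\<sigma> a) (\<sigma> b) > 0"
proof (induction n arbitrary: b)
  case 0
  have "\<sigma> a = \<sigma> b \<longleftrightarrow> a = b" using bij by (metis bij_def inj_eq)
  then show ?case by simp
next
  case (Suc n)
  have "matpow P (n + 1) a b > 0 \<longleftrightarrow> (\<exists>j. matpow P n a j > 0 \<and> matpow P 1 j b > 0)"
    by (rule pos_add[OF fin sP])
  also have "\<dots> \<longleftrightarrow> (\<exists>j. matpow Q n (\<sigma> a) (\<sigma> j) > 0 \<and> Q (\<sigma> j) (\<sigma> b) > 0)"
    using Suc pat by (simp del: matpow.simps)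
  also have "\<dots> \<longleftrightarrow> (\<exists>l. matpow Q n (\<sigma> a) l > 0 \<and> matpow Q 1 l (\<sigma> b) > 0)"
    using bij by (simp del: matpow.simps) (metis bij_pointE)
  also have "\<dots> \<longleftrightarrow> matpow Q (n + 1) (\<sigma> a) (\<sigma> b) > 0"
    by (rule pos_add[OF fin sQ, symmetric])
  finally show ?case by simp
qed




definition wgt :: "('a \<Rightarrow> 'a \<Rightarrow> real) \<Rightarrow> ('a \<Rightarrow> 'a \<Rightarrow> real) \<Rightarrow> ('a \<Rightarrow> 'a) \<Rightarrow> nat \<Rightarrow> 'a \<Rightarrow> 'a \<Rightarrow> real" where
  "wgt P Q t n i j = sqrt (matpow P n (t i) (t j)) / sqrt (matpow Q n i j)"

definition Vm where
  "Vm P Q t n A = (\<lambda>i j. complex_of_real (wgt P Q t n i j) * A (t i) (t j))"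

definition Wm where
  "Wm P Q s t n B = (\<lambda>a b. B (s a) (s b) / complex_of_real (wgt P Q t n (s a) (s b)))"

context
  fixes P Q :: "'a \<Rightarrow> 'a \<Rightarrow> real" and \<sigma> :: "'a \<Rightarrow> 'a"
  assumes fin: "finite (UNIV :: 'a set)" and sP: "stochastic P" and sQ: "stochastic Q"
    and eP: "essential P" and eQ: "essential Q"
    and bij: "bij \<sigma>" and pat: "\<forall>i j. P i j > 0 \<longleftrightarrow> Q (\<sigma> i) (\<sigma> j) > 0"
begin

abbreviation "\<tau> \<equiv> inv \<sigma>"
abbreviation "w \<equiv> wgt P Q \<tau>"

lemma st[simp]: "\<sigma> (\<tau> i) = i" using bij by (simp add: bij_is_surj surj_f_inv_f)
lemma ts[simp]: "\<tau> (\<sigma> a) = a" using bij by (simp add: bij_is_inj inv_f_f)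
lemma bijt: "bij \<tau>" using bij by (simp add: bij_imp_bij_inv)

lemma patt: "matpow P n (\<tau> i) (\<tau> j) > 0 \<longleftrightarrow> matpow Q n i j > 0"
  using pattern_pow[OF fin sP sQ bij pat, of n "\<tau> i" "\<tau> j"] by simp

lemma nnP: "0 \<le> matpow P n a b" by (rule mp_nonneg[OF fin sP])
lemma nnQ: "0 \<le> matpow Q n a b" by (rule mp_nonneg[OF fin sQ])

lemma zero_iff: "matpow P n (\<tau> i) (\<tau> j) = 0 \<longleftrightarrow> matpow Q n i j = 0"
  using patt[of n i j] nnP[of n "\<tau> i" "\<tau> j"] nnQ[of n i j] by linarith

lemma wz: "w n i j = 0 \<longleftrightarrow> matpow Q n i j = 0"
  unfolding wgt_def using zero_iff[of n i j] nnP[of n "\<tau> i" "\<tau> j"] nnQ[of n i j] by auto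

lemma w_nonneg: "w n i j \<ge> 0" unfolding wgt_def by (intro divide_nonneg_nonneg) (simp_all add: nnP nnQ)

lemma K1: "sqrtP Q n i j * w n i j = sqrtP P n (\<tau> i) (\<tau> j)"
proof (cases "matpow Q n i j = 0")
  case True then show ?thesis using zero_iff unfolding sqrtP_def wgt_def by simp
next
  case False
  then have "sqrt (matpow Q n i j) \<noteq> 0" by simp
  then show ?thesis unfolding sqrtP_def wgt_def by simp
qed

lemma K2: "w n i k * flat (sqrtP P n) (\<tau> i) (\<tau> k) = flat (sqrtP Q n) i k"
proof (cases "matpow Q n i k > 0")
  case True
  then have p: "matpow P n (\<tau> i) (\<tau> k) > 0" using patt by blast
  then show ?thesis using True unfolding flat_def sqrtP_def wgt_def by simp
next
  case False
  then have "\<not> matpow P n (\<tau> i) (\<tau> k) > 0" using patt by blast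
  then show ?thesis using False unfolding flat_def sqrtP_def wgt_def by simp
qed

lemma w0: "w 0 i j = (if i = j then 1 else 0)"
  unfolding wgt_def using bijt by (auto simp: bij_def inj_eq)

lemma w_pos_iff: "w n i j > 0 \<longleftrightarrow> matpow Q n i j > 0"
  using wz[of n i j] w_nonneg[of n i j] nnQ[of n i j] by linarith

lemma w_bound: "\<exists>K\<ge>0. \<forall>n i j. w n i j \<le> K"
proof -
  obtain c where c: "c > 0" "\<And>n i j. matpow Q n i j > 0 \<Longrightarrow> c \<le> matpow Q n i j"
    using lower_bound[OF fin sQ eQ] by blast
  have "w n i j \<le> 1 / sqrt c" for n i j
  proof (cases "matpow Q n i j > 0")
    case False
    then have "w n i j = 0" using w_pos_iff[of n i j] w_nonneg[of n i j] by linarith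
    then show ?thesis using c by simp
  next
    case True
    have "sqrt (matpow P n (\<tau> i) (\<tau> j)) \<le> 1" using mp_le1[OF fin sP] by simp
    moreover have "sqrt c \<le> sqrt (matpow Q n i j)" using c(2)[OF True] by simp
    ultimately show ?thesis unfolding wgt_def using c(1)
      by (intro frac_le) auto
  qed
  then show ?thesis using c(1) by (intro exI[of _ "1 / sqrt c"]) auto
qed

lemma winv_bound: "\<exists>K\<ge>0. \<forall>n i j. w n i j \<noteq> 0 \<longrightarrow> 1 / w n i j \<le> K"
proof -
  obtain c where c: "c > 0" "\<And>n i j. matpow P n i j > 0 \<Longrightarrow> c \<le> matpow P n i j"
    using lower_bound[OF fin sP eP] by blast
  have "1 / w n i j \<le> 1 / sqrt c" if "w n i j \<noteq> 0" for n i j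
  proof -
    have Q: "matpow Q n i j > 0" using that w_pos_iff[of n i j] w_nonneg[of n i j] by linarith
    then have Pp: "matpow P n (\<tau> i) (\<tau> j) > 0" using patt by blast
    have "1 / w n i j = sqrt (matpow Q n i j) / sqrt (matpow P n (\<tau> i) (\<tau> j))"
      unfolding wgt_def by simp
    also have "\<dots> \<le> 1 / sqrt c"
    proof (intro frac_le)
      show "sqrt (matpow Q n i j) \<le> 1" using mp_le1[OF fin sQ] by simp
      show "sqrt c \<le> sqrt (matpow P n (\<tau> i) (\<tau> j))" using c(2)[OF Pp] by simp
    qed (use c(1) in auto)
    finally show ?thesis .
  qed
  then show ?thesis using c(1) by (intro exI[of _ "1 / sqrt c"]) auto
qed

abbreviation "V \<equiv> Vm P Q \<tau>"
abbreviation "W \<equiv> Wm P Q \<sigma> \<tau>"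

lemma K1c: "complex_of_real (sqrtP Q n i j) * complex_of_real (w n i j) = complex_of_real (sqrtP P n (\<tau> i) (\<tau> j))"
  by (simp only: of_real_mult[symmetric] K1)

lemma K2c: "complex_of_real (w n i k) * complex_of_real (flat (sqrtP P n) (\<tau> i) (\<tau> k)) = complex_of_real (flat (sqrtP Q n) i k)"
  by (simp only: of_real_mult[symmetric] K2)

lemma w0c: "complex_of_real (w 0 i i) = 1" by (simp add: w0)

lemma UP_ok: "V (n + m) (UP P n m A B) = UP Q n m (V n A) (V m B)"
proof (intro ext)
  fix i k
  consider "n = 0" | "n \<noteq> 0" "m = 0" | "n \<noteq> 0" "m \<noteq> 0" by blast
  then show "V (n + m) (UP P n m A B) i k = UP Q n m (V n A) (V m B) i k"
  proof cases
    case 1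
    then show ?thesis by (simp add: UP_def Vm_def w0c)
  next
    case 2
    then show ?thesis by (simp add: UP_def Vm_def w0c)
  next
    case 3
    define h where "h j = (complex_of_real (sqrtP P n (\<tau> i) j) * A (\<tau> i) j) *
        (complex_of_real (sqrtP P m j (\<tau> k)) * B j (\<tau> k))" for j
    have sL: "matmul (\<lambda>i j. complex_of_real (sqrtP P n i j) * A i j)
                (\<lambda>j k. complex_of_real (sqrtP P m j k) * B j k) (\<tau> i) (\<tau> k) = (\<Sum>j\<in>UNIV. h j)"
      unfolding matmul_def h_def using fin by simp
    have "matmul (\<lambda>i j. complex_of_real (sqrtP Q n i j) * V n A i j)
                (\<lambda>j k. complex_of_real (sqrtP Q m j k) * V m B j k) i k = (\<Sum>j\<in>UNIV. h (\<tau> j))"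
      unfolding matmul_def using fin
    proof (simp, intro sum.cong refl)
      fix j
      have "complex_of_real (sqrtP Q n i j) * V n A i j * (complex_of_real (sqrtP Q m j k) * V m B j k)
        = (complex_of_real (sqrtP Q n i j) * complex_of_real (w n i j)) * A (\<tau> i) (\<tau> j) *
          ((complex_of_real (sqrtP Q m j k) * complex_of_real (w m j k)) * B (\<tau> j) (\<tau> k))"
        unfolding Vm_def by (simp add: mult.assoc)
      also have "\<dots> = h (\<tau> j)" unfolding K1c h_def by simp
      finally show "complex_of_real (sqrtP Q n i j) * V n A i j * (complex_of_real (sqrtP Q m j k) * V m B j k) = h (\<tau> j)" .
    qed
    also have "\<dots> = (\<Sum>j\<in>UNIV. h j)" using sum.reindex_bij_betw[OF bijt, of h] by simp
    finally have sR: "matmul (\<lambda>i j. complex_of_real (sqrtP Q n i j) * V n A i j)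
                (\<lambda>j k. complex_of_real (sqrtP Q m j k) * V m B j k) i k = (\<Sum>j\<in>UNIV. h j)" .
    have "V (n + m) (UP P n m A B) i k = (complex_of_real (w (n + m) i k) *
        complex_of_real (flat (sqrtP P (n + m)) (\<tau> i) (\<tau> k))) * (\<Sum>j\<in>UNIV. h j)"
      using 3 unfolding Vm_def UP_def sL[symmetric] by (simp add: mult.assoc)
    also have "\<dots> = complex_of_real (flat (sqrtP Q (n + m)) i k) * (\<Sum>j\<in>UNIV. h j)"
      by (simp only: K2c)
    also have "\<dots> = UP Q n m (V n A) (V m B) i k"
      using 3 unfolding UP_def sR[symmetric] by simp
    finally show ?thesis .
  qed
qed

lemma V_in: "A \<in> Arv P n \<Longrightarrow> V n A \<in> Arv Q n"
proof -
  have "V n A i j = 0" if "matpow Q n i j = 0" for i j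
    using wz[of n i j] that unfolding Vm_def by simp
  then show ?thesis unfolding Arv_fin[OF fin] by blast
qed

lemma W_in: "B \<in> Arv Q n \<Longrightarrow> W n B \<in> Arv P n"
proof -
  assume B: "B \<in> Arv Q n"
  have "W n B a b = 0" if "matpow P n a b = 0" for a b
  proof -
    have "matpow P n (\<tau> (\<sigma> a)) (\<tau> (\<sigma> b)) = 0" using that by (simp only: ts)
    then have "matpow Q n (\<sigma> a) (\<sigma> b) = 0" using zero_iff[of n "\<sigma> a" "\<sigma> b"] by blast
    moreover have "\<forall>i j. matpow Q n i j = 0 \<longrightarrow> B i j = 0" using B unfolding Arv_fin[OF fin] by blast
    ultimately have "B (\<sigma> a) (\<sigma> b) = 0" by blast
    then show ?thesis unfolding Wm_def by simp
  qed
  then show ?thesis unfolding Arv_fin[OF fin] by blast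
qed

lemma WV: "A \<in> Arv P n \<Longrightarrow> W n (V n A) = A"
proof (intro ext)
  fix a b assume A: "A \<in> Arv P n"
  show "W n (V n A) a b = A a b"
  proof (cases "w n (\<sigma> a) (\<sigma> b) = 0")
    case True
    then have "matpow Q n (\<sigma> a) (\<sigma> b) = 0" using wz by blast
    then have "matpow P n (\<tau> (\<sigma> a)) (\<tau> (\<sigma> b)) = 0" using zero_iff[of n "\<sigma> a" "\<sigma> b"] by blast
    then have "matpow P n a b = 0" by (simp only: ts)
    then have "A a b = 0" using A unfolding Arv_fin[OF fin] by blast
    then show ?thesis unfolding Wm_def Vm_def by simp
  next
    case False
    then show ?thesis unfolding Wm_def Vm_def by simp
  qed
qed

lemma VW: "B \<in> Arv Q n \<Longrightarrow> V n (W n B) = B"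
proof (intro ext)
  fix i j assume B: "B \<in> Arv Q n"
  show "V n (W n B) i j = B i j"
  proof (cases "w n i j = 0")
    case True
    then have "B i j = 0" using B wz unfolding Arv_fin[OF fin] by blast
    then show ?thesis unfolding Wm_def Vm_def by simp
  next
    case False
    then show ?thesis unfolding Wm_def Vm_def by simp
  qed
qed

lemma V_bij: "bij_betw (V n) (Arv P n) (Arv Q n)"
proof (rule bij_betw_byWitness[where f'="W n"])
  show "\<forall>a\<in>Arv P n. W n (V n a) = a" by (intro ballI WV)
  show "\<forall>a'\<in>Arv Q n. V n (W n a') = a'" by (intro ballI VW)
  show "V n ` Arv P n \<subseteq> Arv Q n" by (intro image_subsetI V_in)
  show "W n ` Arv Q n \<subseteq> Arv P n" by (intro image_subsetI W_in)
qed

lemma V_inv: "B \<in> Arv Q n \<Longrightarrow> inv_into (Arv P n) (V n) B = W n B"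
proof -
  assume B: "B \<in> Arv Q n"
  have inj: "inj_on (V n) (Arv P n)" using V_bij[of n] by (rule bij_betw_imp_inj_on)
  have "inv_into (Arv P n) (V n) (V n (W n B)) = W n B" using inv_into_f_f[OF inj W_in[OF B]] .
  then show ?thesis unfolding VW[OF B] .
qed

lemma sim_main: "similarity P Q (rho_of \<sigma>) V"
proof -
  obtain K where K: "K \<ge> 0" "\<And>n i j. w n i j \<le> K" using w_bound by blast
  obtain K' where K': "K' \<ge> 0" "\<And>n i j. w n i j \<noteq> 0 \<Longrightarrow> 1 / w n i j \<le> K'" using winv_bound by blast
  define C where "C = max K K'"
  have C: "C \<ge> 0" "K \<le> C" "K' \<le> C" unfolding C_def using K by auto
  have n1: "arv_norm (V n A) \<le> C * arv_norm A" for n A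
  proof (rule arv_norm_le[OF fin bijt C(1)])
    fix i j
    have "cmod (V n A i j) = w n i j * cmod (A (\<tau> i) (\<tau> j))"
      unfolding Vm_def using w_nonneg by (simp add: norm_mult)
    also have "\<dots> \<le> C * cmod (A (\<tau> i) (\<tau> j))"
      using K(2)[of n i j] C(2) by (intro mult_right_mono) auto
    finally show "cmod (V n A i j) \<le> C * cmod (A (\<tau> i) (\<tau> j))" .
  qed
  have n2: "arv_norm (W n B) \<le> C * arv_norm B" for n B
  proof (rule arv_norm_le[OF fin bij C(1)])
    fix a b
    show "cmod (W n B a b) \<le> C * cmod (B (\<sigma> a) (\<sigma> b))"
    proof (cases "w n (\<sigma> a) (\<sigma> b) = 0")
      case True then show ?thesis unfolding Wm_def using C by simp
    next
      case False
      have "cmod (W n B a b) = (1 / w n (\<sigma> a) (\<sigma> b)) * cmod (B (\<sigma> a) (\<sigma> b))"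
        unfolding Wm_def using w_nonneg by (simp add: norm_divide)
      also have "\<dots> \<le> C * cmod (B (\<sigma> a) (\<sigma> b))"
        using K'(2)[OF False] C(3) by (intro mult_right_mono) auto
      finally show ?thesis .
    qed
  qed
  show ?thesis unfolding similarity_def
  proof (intro conjI)
    show "\<forall>f\<in>linf. V 0 (diagm f) = diagm (rho_of \<sigma> f)"
    proof (intro ballI ext)
      fix f :: "'a \<Rightarrow> complex" and i j
      have "\<tau> i = \<tau> j \<longleftrightarrow> i = j" using bijt by (metis bij_def inj_eq)
      then show "V 0 (diagm f) i j = diagm (rho_of \<sigma> f) i j"
        unfolding Vm_def diagm_def rho_of_def by (simp add: w0)
    qed
    show "\<forall>n\<ge>1. bij_betw (V n) (Arv P n) (Arv Q n)" using V_bij by blast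
    show "\<forall>n\<ge>1. \<forall>A\<in>Arv P n. \<forall>B\<in>Arv P n. V n (\<lambda>i j. A i j + B i j) = (\<lambda>i j. V n A i j + V n B i j)"
      unfolding Vm_def by (simp add: distrib_left)
    show "\<forall>n\<ge>1. \<forall>c. \<forall>A\<in>Arv P n. V n (\<lambda>i j. c * A i j) = (\<lambda>i j. c * V n A i j)"
      unfolding Vm_def by (simp add: mult.left_commute)
    show "\<forall>n\<ge>1. \<forall>a\<in>linf. \<forall>b\<in>linf. \<forall>X\<in>Arv P n. V n (bimod a X b) = bimod (rho_of \<sigma> a) (V n X) (rho_of \<sigma> b)"
      unfolding Vm_def bimod_def rho_of_def by (simp add: mult.left_commute mult.assoc)
    show "\<exists>C. \<forall>n\<ge>1. (\<forall>A\<in>Arv P n. arv_norm (V n A) \<le> C * arv_norm A) \<and>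
                 (\<forall>B\<in>Arv Q n. arv_norm (inv_into (Arv P n) (V n) B) \<le> C * arv_norm B)"
      using n1 n2 V_inv by (intro exI[of _ C]) auto
    show "\<forall>n m. \<forall>A\<in>Arv P n. \<forall>B\<in>Arv P m. V (n + m) (UP P n m A B) = UP Q n m (V n A) (V m B)"
      using UP_ok by blast
  qed
qed

end



theorem mainTheorem10:
  fixes P Q :: "'a::countable \<Rightarrow> 'a \<Rightarrow> real"
  assumes "stochastic P" and "stochastic Q"
  shows "(\<forall>\<rho>. star_automorphism \<rho> \<and> (\<exists>V. similarity P Q \<rho> V) \<longrightarrow>
            (\<forall>i j. P i j > 0 \<longleftrightarrow> Q (sigma_of \<rho> i) (sigma_of \<rho> j) > 0))
       \<and> (finite (UNIV :: 'a set) \<and> essential P \<and> essential Q \<longrightarrow>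
            (\<forall>\<sigma>. bij \<sigma> \<and> (\<forall>i j. P i j > 0 \<longleftrightarrow> Q (\<sigma> i) (\<sigma> j) > 0) \<longrightarrow>
               (\<exists>V. similarity P Q (rho_of \<sigma>) V)))"
proof (intro conjI allI impI)
  fix \<rho> i j
  assume h: "star_automorphism \<rho> \<and> (\<exists>V. similarity P Q \<rho> V)"
  then obtain V where "similarity P Q \<rho> V" by blast
  then show "P i j > 0 \<longleftrightarrow> Q (sigma_of \<rho> i) (sigma_of \<rho> j) > 0"
    using part1[OF assms] h by blast
next
  fix \<sigma> :: "'a \<Rightarrow> 'a"
  assume h1: "finite (UNIV :: 'a set) \<and> essential P \<and> essential Q"
    and h2: "bij \<sigma> \<and> (\<forall>i j. P i j > 0 \<longleftrightarrow> Q (\<sigma> i) (\<sigma> j) > 0)"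
  show "\<exists>V. similarity P Q (rho_of \<sigma>) V"
    using sim_main[where P=P and Q=Q and \<sigma>=\<sigma>] h1 h2 assms by blast
qed

end
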